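(* Consider the randomized mechanism which, given a profile $\mathbf x\in[0,1]^n$ with $n_1=|\{i:x_i\in[0,\tfrac12]\}|$ and $n_2=|\{i:x_i\in(\tfrac12,1]\}|$, outputs $y=0$ with probability $\frac{n_2^2}{n_1^2+n_2^2}$ and $y=1$ with probability $\frac{n_1^2}{n_1^2+n_2^2}$. This mechanism is a $2$-approximation for the $L_p$ social cost both for $p=1$ and for $p=+\infty$.
   Context: Agent $i$ at $x_i\in[0,1]$ incurs cost $c(x_i,y)=1-|x_i-y|$ from a facility at $y\in[0,1]$. $\mathrm{sc}_1(y,\mathbf x)=\sum_ic(x_i,y)$ and $\mathrm{sc}_\infty(y,\mathbf x)=\max_ic(x_i,y)$. A randomized mechanism $f$ is an $\alpha$-approximation if $\mathbb E_{y\sim f(\mathbf x)}[\mathrm{sc}_p(y,\mathbf x)]\le\alpha\min_{z\in[0,1]}\mathrm{sc}_p(z,\mathbf x)$ for every profile $\mathbf x$. *)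

theory Defs
  imports "HOL-Probability.Probability"
begin

definition cost :: "real \<Rightarrow> real \<Rightarrow> real" where
  "cost xi y = 1 - \<bar>xi - y\<bar>"

definition sc1 :: "nat \<Rightarrow> (nat \<Rightarrow> real) \<Rightarrow> real \<Rightarrow> real" where
  "sc1 n x y = (\<Sum>i<n. cost (x i) y)"

definition scinf :: "nat \<Rightarrow> (nat \<Rightarrow> real) \<Rightarrow> real \<Rightarrow> real" where
  "scinf n x y = Max ((\<lambda>i. cost (x i) y) ` {..<n})"

definition valid_profile :: "nat \<Rightarrow> (nat \<Rightarrow> real) \<Rightarrow> bool" where
  "valid_profile n x \<longleftrightarrow> n \<ge> 1 \<and> (\<forall>i<n. x i \<in> {0..1})"

definition is_approx ::
  "(nat \<Rightarrow> (nat \<Rightarrow> real) \<Rightarrow> real \<Rightarrow> real) \<Rightarrow> real \<Rightarrow>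
   (nat \<Rightarrow> (nat \<Rightarrow> real) \<Rightarrow> real pmf) \<Rightarrow> bool" where
  "is_approx sc \<alpha> f \<longleftrightarrow>
     (\<forall>n x. valid_profile n x \<longrightarrow>
        measure_pmf.expectation (f n x) (sc n x) \<le> \<alpha> * (INF z\<in>{0..1}. sc n x z))"

definition cnt1 :: "nat \<Rightarrow> (nat \<Rightarrow> real) \<Rightarrow> nat" where
  "cnt1 n x = card {i. i < n \<and> x i \<in> {0..1/2}}"

definition cnt2 :: "nat \<Rightarrow> (nat \<Rightarrow> real) \<Rightarrow> nat" where
  "cnt2 n x = card {i. i < n \<and> x i \<in> {1/2<..1}}"

definition mech :: "nat \<Rightarrow> (nat \<Rightarrow> real) \<Rightarrow> real pmf" where
  "mech n x = map_pmf (\<lambda>b. if b then 1 else 0)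
     (bernoulli_pmf (real (cnt1 n x)^2 / (real (cnt1 n x)^2 + real (cnt2 n x)^2)))"

end

theory Submission
  imports Defs
begin
lemma frac_le1: "(a::real) \<ge> 0 \<Longrightarrow> b \<ge> 0 \<Longrightarrow> a/(a+b) \<le> 1"
  by (cases "a+b=0") (auto simp: divide_le_eq_1)

lemma expmech: "measure_pmf.expectation (mech n x) f =
  (real (cnt1 n x)^2 / (real (cnt1 n x)^2 + real (cnt2 n x)^2)) * f 1 +
  (1 - real (cnt1 n x)^2 / (real (cnt1 n x)^2 + real (cnt2 n x)^2)) * f 0"
proof -
  let ?p = "real (cnt1 n x)^2 / (real (cnt1 n x)^2 + real (cnt2 n x)^2)"
  have "0 \<le> ?p" by simp
  moreover have "?p \<le> 1"
    by (rule frac_le1) auto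
  ultimately show ?thesis unfolding mech_def by (simp add: integral_map_pmf algebra_simps)
qed

lemma convex_eq: "(a::real)+b \<noteq> 0 \<Longrightarrow> (a/(a+b))*S + (1 - a/(a+b))*T = (a*S+b*T)/(a+b)"
proof -
  assume h: "a+b \<noteq> 0"
  have "1 - a/(a+b) = b/(a+b)" using h by (simp add: divide_simps)
  then show ?thesis by (simp add: add_divide_distrib)
qed

lemma key1:
  fixes p q S T :: real
  assumes "p \<ge> 0" "q \<ge> 0" "S + T = p + q" "S \<ge> q/2" "T \<ge> p/2"
  shows "(p^2/(p^2+q^2))*S + (1 - p^2/(p^2+q^2))*T \<le> 2*S"
proof (cases "p^2+q^2 = 0")
  case True then show ?thesis using assms by simp
next
  case False
  have "p^2+q^2 \<ge> 0" by simp
  then have D: "p^2+q^2 > 0" using False by linarith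
  have "p^2*S + q^2*T \<le> 2*S*(p^2+q^2)"
  proof -
    have "(p^2+3*q^2)*S \<ge> (p^2+3*q^2)*(q/2)" using assms by (intro mult_left_mono) auto
    moreover have "(p^2+3*q^2)*(q/2) \<ge> q^2*(p+q)"
    proof -
      have "q*(p-q)^2 \<ge> 0" using assms by simp
      then show ?thesis by (simp add: power2_eq_square algebra_simps)
    qed
    ultimately have A: "q^2*(p+q) \<le> (p^2+3*q^2)*S" by (simp add: mult.commute)
    have e: "T = p + q - S" using assms(3) by simp
    have "p^2*S + q^2*T = p^2*S + q^2*(p+q) - q^2*S" unfolding e by (simp add: algebra_simps)
    also have "... \<le> p^2*S + (p^2+3*q^2)*S - q^2*S" using A by linarith
    also have "... = 2*S*(p^2+q^2)" by (simp add: algebra_simps)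
    finally show ?thesis .
  qed
  moreover have "(p^2/(p^2+q^2))*S + (1 - p^2/(p^2+q^2))*T = (p^2*S + q^2*T)/(p^2+q^2)"
    using False by (rule convex_eq)
  ultimately show ?thesis using D by (simp add: divide_le_eq)
qed

lemma sq_nz: "(p::real) + q \<noteq> 0 \<Longrightarrow> p \<ge> 0 \<Longrightarrow> q \<ge> 0 \<Longrightarrow> p^2+q^2 \<noteq> 0"
proof -
  assume a: "p + q \<noteq> 0" "p \<ge> 0" "q \<ge> 0"
  then have "p > 0 \<or> q > 0" by linarith
  moreover have "p^2 \<ge> 0" "q^2 \<ge> 0" by simp_all
  ultimately show ?thesis by (metis add_nonneg_pos add_pos_nonneg less_irrefl zero_less_power)
qed

lemma one_minus: "(a::real)+b \<noteq> 0 \<Longrightarrow> 1 - a/(a+b) = b/(b+a)"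
  by (simp add: divide_simps add.commute)

lemma swap_comb: "1 - (a::real) = b \<Longrightarrow> a*S + (1-a)*T = b*T + (1-b)*S"
proof -
  assume h: "1 - a = b"
  have "a*S + (1-a)*T - (b*T + (1-b)*S) = (a+b-1)*(S-T)" by (simp add: algebra_simps)
  also have "\<dots> = 0" using h by simp
  finally show ?thesis by simp
qed

lemma card_sum: "real (card {i. i<(n::nat) \<and> P i}) = (\<Sum>i<n. if P i then 1 else 0)"
proof -
  have "{i. i<n \<and> P i} = {i\<in>{..<n}. P i}" by auto
  then have "real (card {i. i<n \<and> P i}) = (\<Sum>i\<in>{i\<in>{..<n}. P i}. 1)" by simp
  also have "\<dots> = (\<Sum>i<n. if P i then 1 else 0)" by (rule sum.inter_filter) (rule finite_lessThan)
  finally show ?thesis .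
qed

lemma inf_bound:
  fixes sc :: "real \<Rightarrow> real"
  assumes "\<And>z. z \<in> {0..1} \<Longrightarrow> E \<le> 2 * sc z"
  shows "E \<le> 2 * (INF z\<in>{0..1}. sc z)"
proof -
  have "E/2 \<le> (INF z\<in>{0..1}. sc z)"
    by (rule cINF_greatest) (use assms in force)+
  then show ?thesis by linarith
qed

lemma cost_interp: "xi \<in> {0..1} \<Longrightarrow> z \<in> {0..1} \<Longrightarrow>
   (1-z)*cost xi 0 + z*cost xi 1 \<le> cost xi z"
proof -
  assume a: "xi \<in> {0..1}" "z \<in> {0..1}"
  have h1: "z*xi \<le> z" "z*xi \<le> xi" using a by (auto simp: mult_left_le mult_left_le_one_le)
  have e: "(1-z)*cost xi 0 + z*cost xi 1 = 1 - xi - z + 2*(z*xi)" using a unfolding cost_def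
    by (simp add: algebra_simps)
  show ?thesis unfolding e unfolding cost_def using h1 by (cases "xi \<ge> z") (simp_all add: abs_if)
qed

lemma comb:
  fixes E z S T U :: real
  assumes "(1-z)*E \<le> (1-z)*(2*T)" "z*E \<le> z*(2*S)" "(1-z)*T+z*S \<le> U"
  shows "E \<le> 2*U"
proof -
  have "E = (1-z)*E + z*E" by (simp add: algebra_simps)
  also have "\<dots> \<le> (1-z)*(2*T) + z*(2*S)" using assms(1,2) by linarith
  also have "\<dots> = 2*((1-z)*T+z*S)" by (simp add: algebra_simps)
  also have "\<dots> \<le> 2*U" using assms(3) by simp
  finally show ?thesis .
qed

lemma part1:
  assumes v: "valid_profile n x"
  shows "measure_pmf.expectation (mech n x) (sc1 n x) \<le> 2 * (INF z\<in>{0..1}. sc1 n x z)"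
proof -
  let ?p = "real (cnt1 n x)" and ?q = "real (cnt2 n x)"
  let ?S = "sc1 n x 1" and ?T = "sc1 n x 0"
  let ?a = "?p^2/(?p^2+?q^2)"
  have xr: "\<And>i. i<n \<Longrightarrow> x i \<in> {0..1}" using v by (simp add: valid_profile_def)
  have S: "?S = (\<Sum>i<n. x i)" unfolding sc1_def cost_def
  proof (rule sum.cong)
    fix i assume "i \<in> {..<n}"
    then have "x i \<le> 1" using xr by auto
    then show "1 - \<bar>x i - 1\<bar> = x i" by simp
  qed simp
  have T: "?T = (\<Sum>i<n. 1 - x i)" unfolding sc1_def cost_def
  proof (rule sum.cong)
    fix i assume "i \<in> {..<n}"
    then have "x i \<ge> 0" using xr by auto
    then show "1 - \<bar>x i - 0\<bar> = 1 - x i" by simp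
  qed simp
  have pq: "?p = (\<Sum>i<n. if x i \<in> {0..1/2} then 1 else 0)" unfolding cnt1_def by (rule card_sum)
  have qq: "?q = (\<Sum>i<n. if x i \<in> {1/2<..1} then 1 else 0)" unfolding cnt2_def by (rule card_sum)
  have Sn: "?S + ?T = real n" unfolding S T sum.distrib[symmetric] by simp
  have "real n = (\<Sum>i<n. 1::real)" by simp
  also have "\<dots> = ?p + ?q" unfolding pq qq sum.distrib[symmetric]
  proof (rule sum.cong)
    fix i assume "i \<in> {..<n}"
    then have "x i \<in> {0..1}" using xr by auto
    then show "(1::real) = (if x i \<in> {0..1/2} then 1 else 0) + (if x i \<in> {1/2<..1} then 1 else 0)"
      by (cases "x i \<le> 1/2") auto
  qed simp
  finally have ST: "?S + ?T = ?p + ?q" using Sn by simp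
  have Sq: "?S \<ge> ?q/2"
  proof -
    have "?q/2 = (\<Sum>i<n. if x i \<in> {1/2<..1} then 1/2 else 0)" unfolding qq sum_divide_distrib
      by (rule sum.cong) auto
    also have "\<dots> \<le> (\<Sum>i<n. x i)"
    proof (rule sum_mono)
      fix i assume "i \<in> {..<n}"
      then have "x i \<in> {0..1}" using xr by auto
      then show "(if x i \<in> {1/2<..1} then 1/2 else 0) \<le> x i" by (cases "x i \<le> 1/2") auto
    qed
    finally show ?thesis using S by simp
  qed
  have Tp: "?T \<ge> ?p/2"
  proof -
    have "?p/2 = (\<Sum>i<n. if x i \<in> {0..1/2} then 1/2 else 0)" unfolding pq sum_divide_distrib
      by (rule sum.cong) auto
    also have "\<dots> \<le> (\<Sum>i<n. 1 - x i)"
    proof (rule sum_mono)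
      fix i assume "i \<in> {..<n}"
      then have "x i \<in> {0..1}" using xr by auto
      then show "(if x i \<in> {0..1/2} then 1/2 else 0) \<le> 1 - x i" by (cases "x i \<le> 1/2") auto
    qed
    finally show ?thesis using T by simp
  qed
  have E: "measure_pmf.expectation (mech n x) (sc1 n x) = ?a * ?S + (1 - ?a) * ?T"
    by (rule expmech)
  have p0: "?p \<ge> 0" and q0: "?q \<ge> 0" by simp_all
  have k1: "?a * ?S + (1 - ?a) * ?T \<le> 2 * ?S"
    by (rule key1[OF p0 q0 ST Sq Tp])
  have ST': "?T + ?S = ?q + ?p" using ST by linarith
  have k2': "(?q^2/(?q^2+?p^2)) * ?T + (1 - ?q^2/(?q^2+?p^2)) * ?S \<le> 2 * ?T"
    by (rule key1[OF q0 p0 ST' Tp Sq])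
  have n1: "real n \<ge> 1" using v by (simp add: valid_profile_def)
  have "?p + ?q \<noteq> 0" using ST Sn n1 by linarith
  then have D: "?p^2 + ?q^2 \<noteq> 0" by (rule sq_nz) auto
  have "(1 - ?a) = ?q^2/(?q^2+?p^2)" using D by (rule one_minus)
  then have "?a * ?S + (1 - ?a) * ?T = (?q^2/(?q^2+?p^2)) * ?T + (1 - ?q^2/(?q^2+?p^2)) * ?S"
    by (rule swap_comb)
  then have k2: "?a * ?S + (1 - ?a) * ?T \<le> 2 * ?T" using k2' by linarith
  show ?thesis
  proof (rule inf_bound)
    fix z :: real assume z: "z \<in> {0..1}"
    have "(\<Sum>i<n. (1-z)*cost (x i) 0 + z*cost (x i) 1) \<le> (\<Sum>i<n. cost (x i) z)"
    proof (rule sum_mono)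
      fix i assume "i \<in> {..<n}"
      then show "(1-z)*cost (x i) 0 + z*cost (x i) 1 \<le> cost (x i) z" using xr z cost_interp by auto
    qed
    moreover have "(\<Sum>i<n. (1-z)*cost (x i) 0 + z*cost (x i) 1) = (1-z)*?T + z*?S"
      unfolding sc1_def by (simp add: sum.distrib sum_distrib_left)
    ultimately have U: "(1-z)*?T + z*?S \<le> sc1 n x z" unfolding sc1_def by simp
    have "(1-z)*(?a * ?S + (1 - ?a) * ?T) \<le> (1-z)*(2*?T)" using z k2 by (intro mult_left_mono) auto
    moreover have "z*(?a * ?S + (1 - ?a) * ?T) \<le> z*(2*?S)" using z k1 by (intro mult_left_mono) auto
    ultimately show "measure_pmf.expectation (mech n x) (sc1 n x) \<le> 2 * sc1 n x z"
      unfolding E using U by (rule comb)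
  qed
qed

lemma scinf_ge: "i < n \<Longrightarrow> cost (x i) z \<le> scinf n x z"
  unfolding scinf_def by (rule Max_ge) auto

lemma scinf_le1: "n \<ge> 1 \<Longrightarrow> scinf n x z \<le> 1"
  unfolding scinf_def by (subst Max_le_iff) (auto simp: cost_def lessThan_empty_iff)

lemma scinf_in: "n \<ge> 1 \<Longrightarrow> \<exists>i<n. scinf n x z = cost (x i) z"
proof -
  assume "n \<ge> 1"
  then have "scinf n x z \<in> (\<lambda>i. cost (x i) z) ` {..<n}" unfolding scinf_def
    by (intro Max_in) (auto simp: lessThan_empty_iff)
  then show ?thesis by auto
qed

lemma part2:
  assumes v: "valid_profile n x"
  shows "measure_pmf.expectation (mech n x) (scinf n x) \<le> 2 * (INF z\<in>{0..1}. scinf n x z)"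
proof -
  let ?p = "real (cnt1 n x)" and ?q = "real (cnt2 n x)"
  let ?a = "?p^2/(?p^2+?q^2)"
  have xr: "\<And>i. i<n \<Longrightarrow> x i \<in> {0..1}" and n1: "n \<ge> 1" using v by (auto simp: valid_profile_def)
  have E: "measure_pmf.expectation (mech n x) (scinf n x) = ?a * scinf n x 1 + (1 - ?a) * scinf n x 0"
    by (rule expmech)
  have a0: "?a \<ge> 0" by simp
  have a1: "?a \<le> 1" by (rule frac_le1) auto
  show ?thesis
  proof (rule inf_bound)
    fix z :: real assume z: "z \<in> {0..1}"
    show "measure_pmf.expectation (mech n x) (scinf n x) \<le> 2 * scinf n x z"
    proof (cases "(\<exists>i<n. x i \<le> 1/2) \<and> (\<exists>i<n. x i > 1/2)")
      case True
      then obtain i j where i: "i<n" "x i \<le> 1/2" and j: "j<n" "x j > 1/2" by auto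
      have "scinf n x z \<ge> 1/2"
      proof (cases "z \<le> 1/2")
        case True
        have "cost (x i) z \<ge> 1/2" using xr[OF i(1)] i z True unfolding cost_def by (auto simp: abs_if)
        then show ?thesis using scinf_ge[of i n x z] i(1) by linarith
      next
        case False
        have "cost (x j) z \<ge> 1/2" using xr[OF j(1)] j z False unfolding cost_def by (auto simp: abs_if)
        then show ?thesis using scinf_ge[of j n x z] j(1) by linarith
      qed
      moreover have "?a * scinf n x 1 + (1 - ?a) * scinf n x 0 \<le> ?a * 1 + (1 - ?a) * 1"
        using a0 a1 scinf_le1[OF n1] by (intro add_mono mult_left_mono) auto
      ultimately show ?thesis unfolding E by simp
    next
      case False
      then consider (B) "\<forall>i<n. x i \<le> 1/2" | (C) "\<forall>i<n. x i > 1/2" by force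
      then show ?thesis
      proof cases
        case B
        have c2: "cnt2 n x = 0" unfolding cnt2_def using B by (auto simp: card_eq_0_iff)
        have "{i. i < n \<and> x i \<in> {0..1/2}} = {..<n}" using B xr by auto
        then have c1: "cnt1 n x = n" unfolding cnt1_def by simp
        have a: "?a = 1" using c1 c2 n1 by simp
        have E1: "measure_pmf.expectation (mech n x) (scinf n x) = scinf n x 1" unfolding E a by simp
        obtain j where j: "j<n" "scinf n x 1 = cost (x j) 1" using scinf_in[OF n1] by blast
        have "cost (x j) 1 \<le> cost (x j) z" "cost (x j) 1 \<ge> 0"
          using xr[OF j(1)] B j(1) z unfolding cost_def by (auto simp: abs_if)
        then show ?thesis using E1 j scinf_ge[OF j(1), of x z] by linarith
      next
        case C
        have c1: "cnt1 n x = 0" unfolding cnt1_def using C by (auto simp: card_eq_0_iff)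
        have a: "?a = 0" using c1 by simp
        have E1: "measure_pmf.expectation (mech n x) (scinf n x) = scinf n x 0" unfolding E a by simp
        obtain j where j: "j<n" "scinf n x 0 = cost (x j) 0" using scinf_in[OF n1] by blast
        have "cost (x j) 0 \<le> cost (x j) z" "cost (x j) 0 \<ge> 0"
          using xr[OF j(1)] C j(1) z unfolding cost_def by (auto simp: abs_if)
        then show ?thesis using E1 j scinf_ge[OF j(1), of x z] by linarith
      qed
    qed
  qed
qed

theorem theorem12:
  shows "is_approx sc1 2 mech \<and> is_approx scinf 2 mech"
  unfolding is_approx_def using part1 part2 by blast

end
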